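(* Let $s\in\mathbb N$ and $\mathbf n=2^{2m_s}\mathbf 1+2^{m_s}\mathbf p+\mathbf q$ with $\mathbf 0\le\mathbf p,\mathbf q<2^{m_s}\mathbf 1$. Then for $\tau=\tau_F$ and every $\mathbf m<2^{m_s}\mathbf 1$, $$\widehat\tau_{\mathbf n}(\Delta^{(m_s)}_{\mathbf m})=2^{s-1-dm_s}W^{(m_s)}_{\mathbf q\mathbf m}\,\delta^{\mathbf p}_{\mathbf m}\,\mathrm I(\Delta^{(m_s)}_{\mathbf m}\subset\widetilde F_{s-1}),$$ and $$\widehat\tau_{\mathbf n}=2^{s-1-dm_s}W^{(m_s)}_{\mathbf q\mathbf p}\,\mathrm I(\Delta^{(m_s)}_{\mathbf p}\subset\widetilde F_{s-1}).$$
   Context: Fix $d\ge2$. $\mathbb G$ is the dyadic group: sequences $g=(g_k)_{k\ge0}$, $g_k\in\{0,1\}$, coordinatewise addition mod 2, product topology; $\mathbb G^d$ its $d$-th power. For $n\in\mathbb N_0$, $n=\sum_kn_k2^k$, $n_k\in\{0,1\}$. Dyadic interval of rank $k$: $\Delta^{(k)}_m=\{g: g_t=m_{k-1-t},\ 0\le t<k\}$; dyadic cube $\Delta^{(k)}_{\mathbf m}=\prod_l\Delta^{(k)}_{m^l}$. Vector order coordinatewise, $\mathbf 0,\mathbf 1$ the constant vectors. Walsh functions $W_n(g)=\prod_k(-1)^{g_kn_k}$, $W_{\mathbf n}(\mathbf g)=\prod_lW_{n^l}(g^l)$; $W^{(k)}_{\mathbf n\mathbf m}$ is the constant value of $W_{\mathbf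 n}$ on $\Delta^{(k)}_{\mathbf m}$ ($\mathbf n,\mathbf m<2^k\mathbf 1$); $R_{k\mathbf 1}:=W_{2^k\mathbf 1}$. $\delta^{\mathbf p}_{\mathbf m}$ is the Kronecker delta, $\mathrm I(\cdot)$ the indicator of a statement. Quasimeasure: $\tau$ on dyadic cubes with $\tau(\Delta^{(k)}_{\mathbf m})=\sum_{\boldsymbol\sigma\in\{0,1\}^d}\tau(\Delta^{(k+1)}_{2\mathbf m+\boldsymbol\sigma})$; for a dyadic cube $\Delta$ of rank $r$, $\widehat\tau_{\mathbf n}(\Delta):=\int_\Delta W_{\mathbf n}d\tau:=\sum_{\Delta^{(k)}_{\mathbf m}\subset\Delta}W^{(k)}_{\mathbf n\mathbf m}\tau(\Delta^{(k)}_{\mathbf m})$ for any $k\ge r$ with $\mathbf n<2^k\mathbf 1$, and $\widehat\tau_{\mathbf n}:=\widehat\tau_{\mathbf n}(\mathbb G^d)$. For nonempty closed $E$, $\tau_E$ is the unique nonnegative quasimeasure with $\tau_E(\mathbb G^d)=1$, $\tau_E(\Delta)=0$ iff $\Delta\cap E=\emptyset$, splitting the value of a cube meeting $E$ equally among its $2^d$ children that meet $E$. Let $m_1=0$, $m_{s+1}=2(2m_s+1)$; $F_s=\bigcup_{\mathbf m,\mathbf m'<2^{m_s}\mathbf 1}\{\mathbf g\in\Delta^{(2m_s)}_{2^{m_s}\mathbf m+\mathbf m'}: R_{2m_s\mathbf 1}(\mathbf g)=W^{(m_s)}_{\mathbf m\mathbf m'}\}$, $\widetilde F_s=\bigcap_{k=1}^sF_k$,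 $\widetilde F_0=\mathbb G^d$, $F=\bigcap_{s\ge1}F_s$. *)

theory Defs
  imports Complex_Main
begin

text \<open>Points of the dyadic group G: sequences nat => bool (bit g_k).
  Points of G^d: functions 'd => nat => bool, with 'd a finite index type, d = CARD('d).
  Integer vectors: 'd => nat.\<close>

type_synonym 'd pt = "'d \<Rightarrow> nat \<Rightarrow> bool"
type_synonym 'd vec = "'d \<Rightarrow> nat"

definition dyint :: "nat \<Rightarrow> nat \<Rightarrow> (nat \<Rightarrow> bool) set" where
  "dyint k m = {g. \<forall>t<k. g t = bit m (k - 1 - t)}"

definition cube :: "nat \<Rightarrow> 'd vec \<Rightarrow> 'd pt set" where
  "cube k m = {g. \<forall>l. g l \<in> dyint k (m l)}"

definition walsh :: "nat \<Rightarrow> (nat \<Rightarrow> bool) \<Rightarrow> real" where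
  "walsh n g = (-1) ^ card {k. bit n k \<and> g k}"

definition walshv :: "'d::finite vec \<Rightarrow> 'd pt \<Rightarrow> real" where
  "walshv n g = (\<Prod>l\<in>UNIV. walsh (n l) (g l))"

definition cube_pt :: "nat \<Rightarrow> 'd vec \<Rightarrow> 'd pt" where
  "cube_pt k m = (\<lambda>l t. t < k \<and> bit (m l) (k - 1 - t))"

text \<open>W^(k)_{n m}: the constant value of W_n on Delta^(k)_m (for n, m < 2^k 1).\<close>
definition Wc :: "nat \<Rightarrow> 'd::finite vec \<Rightarrow> 'd vec \<Rightarrow> real" where
  "Wc k n m = walshv n (cube_pt k m)"

definition Rk :: "nat \<Rightarrow> 'd::finite pt \<Rightarrow> real" where
  "Rk k = walshv (\<lambda>l. 2 ^ k)"

definition idx :: "nat \<Rightarrow> 'd vec set" where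
  "idx k = {m. \<forall>l. m l < 2 ^ k}"

text \<open>A quasimeasure is given by its values tau k m on the cubes Delta^(k)_m.\<close>
definition quasimeasure :: "(nat \<Rightarrow> 'd::finite vec \<Rightarrow> real) \<Rightarrow> bool" where
  "quasimeasure tau \<longleftrightarrow> (\<forall>k. \<forall>m\<in>idx k.
     tau k m = (\<Sum>\<sigma>\<in>idx 1. tau (Suc k) (\<lambda>l. 2 * m l + \<sigma> l)))"

text \<open>int_Delta W_n d tau for the cube Delta = Delta^(r)_m0, computed at the level
  k = least k >= r with n < 2^k 1 (any admissible k gives the same value for a quasimeasure).\<close>
definition tauhat :: "(nat \<Rightarrow> 'd::finite vec \<Rightarrow> real) \<Rightarrow> 'd vec \<Rightarrow> nat \<Rightarrow> 'd vec \<Rightarrow> real" where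
  "tauhat tau n r m0 =
     (let k = (LEAST k. r \<le> k \<and> n \<in> idx k) in
      \<Sum>m\<in>{m\<in>idx k. cube k m \<subseteq> cube r m0}. Wc k n m * tau k m)"

definition tauhat_all :: "(nat \<Rightarrow> 'd::finite vec \<Rightarrow> real) \<Rightarrow> 'd vec \<Rightarrow> real" where
  "tauhat_all tau n = tauhat tau n 0 (\<lambda>l. 0)"

text \<open>tau_E: total mass 1, the value of a cube meeting E split equally among the
  children meeting E, and 0 on cubes not meeting E.  The parent of Delta^(k+1)_m is
  Delta^(k)_{m div 2}.\<close>
fun tauE :: "'d::finite pt set \<Rightarrow> nat \<Rightarrow> 'd vec \<Rightarrow> real" where
  "tauE E 0 m = (if cube 0 m \<inter> E = {} then 0 else 1)"
| "tauE E (Suc k) m =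
     (if cube (Suc k) m \<inter> E = {} then 0
      else tauE E k (\<lambda>l. m l div 2) /
        real (card {\<sigma>\<in>idx 1. cube (Suc k) (\<lambda>l. 2 * (m l div 2) + \<sigma> l) \<inter> E \<noteq> {}}))"

text \<open>m_s with m_1 = 0, m_{s+1} = 2(2 m_s + 1); ms' j = m_{j+1}.\<close>
fun ms' :: "nat \<Rightarrow> nat" where
  "ms' 0 = 0"
| "ms' (Suc j) = 2 * (2 * ms' j + 1)"

definition ms :: "nat \<Rightarrow> nat" where
  "ms s = ms' (s - 1)"

definition Fs :: "nat \<Rightarrow> 'd::finite pt set" where
  "Fs s = (\<Union>m\<in>idx (ms s). \<Union>m'\<in>idx (ms s).
      {g \<in> cube (2 * ms s) (\<lambda>l. 2 ^ ms s * m l + m' l). Rk (2 * ms s) g = Wc (ms s) m m'})"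

definition Ftil :: "nat \<Rightarrow> 'd::finite pt set" where
  "Ftil s = (\<Inter>k\<in>{1..s}. Fs k)"

definition Fset :: "'d::finite pt set" where
  "Fset = (\<Inter>s\<in>{1..}. Fs s)"

end

theory Submission
  imports Defs "HOL-Library.FuncSet"
begin


lemma bit_lt: "(x::nat) < 2 ^ k \<Longrightarrow> bit x b \<Longrightarrow> b < k"
proof (rule ccontr)
  assume a: "x < 2 ^ k" "bit x b" "\<not> b < k"
  then have "x < 2 ^ b" by (meson less_le_trans not_less one_less_numeral_iff power_increasing_iff semiring_norm(76))
  then have "x div 2 ^ b = 0" by simp
  then show False using a(2) by (simp add: bit_iff_odd)
qed

lemma bit_ge: "bit (x::nat) b \<Longrightarrow> 2 ^ b \<le> x"
proof (rule ccontr)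
  assume "bit x b" "\<not> 2 ^ b \<le> x"
  then have "x < 2 ^ b" by simp
  then have "x div 2 ^ b = 0" by simp
  then show False using \<open>bit x b\<close> by (simp add: bit_iff_odd)
qed

lemma finite_bits: "finite {t. bit (x::nat) t}"
proof -
  have "{t. bit x t} \<subseteq> {..<x}"
    using bit_ge by (auto intro: less_le_trans[OF less_exp])
  then show ?thesis using finite_subset by blast
qed

lemma nat_eq_bits: "(a::nat) < 2 ^ k \<Longrightarrow> b < 2 ^ k \<Longrightarrow> (\<And>i. i < k \<Longrightarrow> bit a i = bit b i) \<Longrightarrow> a = b"
proof (rule bit_eq_iff[THEN iffD2], intro allI impI)
  fix n assume "a < 2 ^ k" "b < 2 ^ k" "\<And>i. i < k \<Longrightarrow> bit a i = bit b i"
  then show "bit a n = bit b n" using bit_lt[of a k n] bit_lt[of b k n] by (cases "n < k") auto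
qed

lemma bit_plus_pow: "(b::nat) < 2 ^ M \<Longrightarrow> bit (b + 2 ^ M * a) i = (if i < M then bit b i else bit a (i - M))"
proof (cases "i < M")
  case True
  assume b: "b < 2 ^ M"
  have e: "take_bit M (b + 2 ^ M * a) = b" using b by (simp add: take_bit_eq_mod)
  have "bit (take_bit M (b + 2 ^ M * a)) i = bit (b + 2 ^ M * a) i"
    using True by (simp add: bit_take_bit_iff)
  then show ?thesis using True e by simp
next
  case False
  assume b: "b < 2 ^ M"
  have "(b + 2 ^ M * a) div 2 ^ i = (b + 2 ^ M * a) div 2 ^ M div 2 ^ (i - M)"
  proof -
    have "(2::nat) ^ i = 2 ^ M * 2 ^ (i - M)" using False by (simp add: power_add[symmetric])
    then show ?thesis by (simp add: div_mult2_eq)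
  qed
  also have "(b + 2 ^ M * a) div 2 ^ M = a" using b by simp
  finally show ?thesis using False by (simp add: bit_iff_odd)
qed

lemma bit_2x: "(c::nat) < 2 \<Longrightarrow> bit (c + 2 * y) b = (if b = 0 then odd c else bit y (b - 1))"
  by (cases b) (auto simp: bit_Suc bit_0)

lemma walsh_set_eq: "{t. bit n t \<and> x t} = {t. bit n t \<and> y t} \<Longrightarrow> walsh n x = walsh n y"
  by (simp add: walsh_def)

lemma walsh_W0: "(n::nat) < 2 ^ a \<Longrightarrow> (\<And>t. t < a \<Longrightarrow> x t = y t) \<Longrightarrow> walsh n x = walsh n y"
  by (rule walsh_set_eq) (auto dest: bit_lt)

lemma walsh_W1:
  assumes "a < 2 ^ j"
  shows "walsh (a + 2 ^ j * b) x = walsh a x * walsh b (\<lambda>t. x (t + j))"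
proof -
  let ?A = "{t. bit a t \<and> x t}" and ?B = "{u. bit b u \<and> x (u + j)}"
  have eq: "{t. bit (a + 2 ^ j * b) t \<and> x t} = ?A \<union> (\<lambda>u. u + j) ` ?B"
  proof (rule set_eqI)
    fix t
    show "t \<in> {t. bit (a + 2 ^ j * b) t \<and> x t} \<longleftrightarrow> t \<in> ?A \<union> (\<lambda>u. u + j) ` ?B"
    proof (cases "t < j")
      case True
      then show ?thesis using assms by (auto simp: bit_plus_pow)
    next
      case False
      then have "t = (t - j) + j" by simp
      then show ?thesis using assms False
        by (auto simp: bit_plus_pow dest: bit_lt intro!: image_eqI[where x="t - j"])
    qed
  qed
  have fA: "finite ?A" by (rule finite_subset[OF _ finite_bits[of a]]) auto
  have fB: "finite ?B" by (rule finite_subset[OF _ finite_bits[of b]]) auto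
  have disj: "?A \<inter> (\<lambda>u. u + j) ` ?B = {}" using assms by (auto dest: bit_lt)
  have "card ({t. bit (a + 2 ^ j * b) t \<and> x t}) = card ?A + card ?B"
    unfolding eq using fA fB disj by (simp add: card_Un_disjoint card_image inj_on_def)
  then show ?thesis by (simp add: walsh_def power_add)
qed

lemma walsh_pow: "walsh (2 ^ P) x = (if x P then -1 else 1)"
proof -
  have "{t. bit ((2::nat) ^ P) t \<and> x t} = (if x P then {P} else {})"
    by (auto simp: bit_exp_iff)
  then show ?thesis by (simp add: walsh_def)
qed

lemma walsh_flip: "walsh n (x(t := \<not> x t)) = (if bit n t then -1 else 1) * walsh n x"
proof -
  let ?A = "{u. bit n u \<and> x u}"
  have fA: "finite ?A" by (rule finite_subset[OF _ finite_bits[of n]]) auto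
  show ?thesis
  proof (cases "bit n t")
    case False
    then have "{u. bit n u \<and> (x(t := \<not> x t)) u} = ?A" by auto
    then show ?thesis using False by (simp add: walsh_def)
  next
    case True
    show ?thesis
    proof (cases "x t")
      case True
      then have e: "?A = insert t {u. bit n u \<and> (x(t := \<not> x t)) u}" using \<open>bit n t\<close> True by auto
      have "t \<notin> {u. bit n u \<and> (x(t := \<not> x t)) u}" using True by simp
      moreover have "finite {u. bit n u \<and> (x(t := \<not> x t)) u}"
        by (rule finite_subset[OF _ finite_bits[of n]]) auto
      ultimately show ?thesis using e \<open>bit n t\<close> by (simp add: walsh_def)
    next
      case False
      then have e: "{u. bit n u \<and> (x(t := \<not> x t)) u} = insert t ?A" using \<open>bit n t\<close> by auto
      have "t \<notin> ?A" using False by simp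
      then show ?thesis using e fA \<open>bit n t\<close> by (simp add: walsh_def)
    qed
  qed
qed

lemma walsh_pm: "walsh n x = 1 \<or> walsh n x = -1"
  unfolding walsh_def by (metis neg_one_even_power neg_one_odd_power)

lemma walsh_sq: "walsh n x * walsh n x = 1"
  using walsh_pm[of n x] by auto

lemma walshv_sq: "walshv n g * walshv n g = 1"
  by (simp add: walshv_def prod.distrib[symmetric] walsh_sq)

lemma walshv_pm: "walshv n g = 1 \<or> walshv n g = -1"
proof -
  have "(walshv n g - 1) * (walshv n g + 1) = 0" using walshv_sq[of n g] by (simp add: algebra_simps)
  then show ?thesis by auto
qed



fun num :: "nat \<Rightarrow> (nat \<Rightarrow> bool) \<Rightarrow> nat" where
  "num 0 x = 0"
| "num (Suc k) x = (if x k then 1 else 0) + 2 * num k x"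

definition numv :: "nat \<Rightarrow> 'd pt \<Rightarrow> 'd vec" where "numv k g = (\<lambda>l. num k (g l))"
definition shiftp :: "nat \<Rightarrow> 'd pt \<Rightarrow> 'd pt" where "shiftp a g = (\<lambda>l t. g l (t + a))"
definition lhsP :: "nat \<Rightarrow> 'd::finite pt \<Rightarrow> real" where
  "lhsP P g = (\<Prod>l\<in>UNIV. if g l P then -1 else 1)"
definition rhs :: "nat \<Rightarrow> 'd::finite pt \<Rightarrow> real" where
  "rhs M g = walshv (numv M g) (shiftp M g)"
definition cons :: "nat \<Rightarrow> 'd::finite pt \<Rightarrow> bool" where
  "cons i g \<longleftrightarrow> lhsP (2 * ms' i) g = rhs (ms' i) g"
definition Sat :: "nat \<Rightarrow> 'd::finite pt \<Rightarrow> bool" where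
  "Sat k g \<longleftrightarrow> (\<forall>i. 2 * ms' i < k \<longrightarrow> cons i g)"

lemma num_lt: "num k x < 2 ^ k"
  by (induction k) auto

lemma bit_num: "bit (num k x) b \<longleftrightarrow> b < k \<and> x (k - 1 - b)"
proof (induction k arbitrary: b)
  case 0
  then show ?case by simp
next
  case (Suc k)
  have "bit (num (Suc k) x) b = (if b = 0 then odd (if x k then 1 else 0 :: nat) else bit (num k x) (b - 1))"
    by (simp only: num.simps) (rule bit_2x, simp)
  then show ?case using Suc by (cases b) auto
qed

lemma num_cong: "(\<And>t. t < k \<Longrightarrow> x t = y t) \<Longrightarrow> num k x = num k y"
  by (induction k) auto

lemma numv_cong: "(\<And>l t. t < k \<Longrightarrow> x l t = y l t) \<Longrightarrow> numv k x = numv k y"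
  unfolding numv_def by (rule ext, rule num_cong) auto

lemma mem_cube: "g \<in> cube k m \<longleftrightarrow> (\<forall>l t. t < k \<longrightarrow> g l t = bit (m l) (k - 1 - t))"
  by (auto simp: cube_def dyint_def)

lemma cube_pt_mem: "cube_pt k m \<in> cube k m"
  by (auto simp: mem_cube cube_pt_def)

lemma numv_idx: "numv k g \<in> idx k"
  by (simp add: idx_def numv_def num_lt)

lemma numv_cube_pt: "m \<in> idx k \<Longrightarrow> numv k (cube_pt k m) = m"
proof (rule ext)
  fix l assume m: "m \<in> idx k"
  show "numv k (cube_pt k m) l = m l"
  proof (rule nat_eq_bits[of _ k])
    show "numv k (cube_pt k m) l < 2 ^ k" by (simp add: numv_def num_lt)
    show "m l < 2 ^ k" using m by (simp add: idx_def)
    fix i assume "i < k"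
    then show "bit (numv k (cube_pt k m) l) i = bit (m l) i"
      by (simp add: numv_def bit_num cube_pt_def)
  qed
qed

lemma cube_numv: "g \<in> cube k (numv k g)"
  by (auto simp: mem_cube numv_def bit_num)

lemma cube_agree: "g \<in> cube k m \<Longrightarrow> t < k \<Longrightarrow> g l t = cube_pt k m l t"
  by (simp add: mem_cube cube_pt_def)

lemma cube_num_iff: "m \<in> idx k \<Longrightarrow> g \<in> cube k m \<longleftrightarrow> numv k g = m"
proof
  assume m: "m \<in> idx k" and g: "g \<in> cube k m"
  have "numv k g = numv k (cube_pt k m)" using g by (intro numv_cong) (simp add: cube_agree)
  then show "numv k g = m" using numv_cube_pt[OF m] by simp
next
  assume "numv k g = m" then show "g \<in> cube k m" using cube_numv by metis
qed

lemma Rk_eq: "Rk P g = lhsP P g"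
  by (simp add: Rk_def walshv_def lhsP_def walsh_pow)

lemma cube2:
  assumes m': "m' \<in> idx M"
  shows "g \<in> cube (2 * M) (\<lambda>l. 2 ^ M * m l + m' l) \<longleftrightarrow> g \<in> cube M m \<and> shiftp M g \<in> cube M m'"
proof -
  have b: "bit (2 ^ M * m l + m' l) i = (if i < M then bit (m' l) i else bit (m l) (i - M))" for l i
    using bit_plus_pow[of "m' l" M "m l" i] m' by (simp add: idx_def add.commute)
  show ?thesis
  proof
    assume g: "g \<in> cube (2 * M) (\<lambda>l. 2 ^ M * m l + m' l)"
    have "g \<in> cube M m" unfolding mem_cube
    proof (intro allI impI)
      fix l t assume "t < M"
      then show "g l t = bit (m l) (M - 1 - t)" using g unfolding mem_cube
        by (auto simp: b)
    qed
    moreover have "shiftp M g \<in> cube M m'" unfolding mem_cube shiftp_def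
    proof (intro allI impI)
      fix l t assume "t < M"
      then show "g l (t + M) = bit (m' l) (M - 1 - t)" using g unfolding mem_cube
        by (auto simp: b) 
    qed
    ultimately show "g \<in> cube M m \<and> shiftp M g \<in> cube M m'" by simp
  next
    assume g: "g \<in> cube M m \<and> shiftp M g \<in> cube M m'"
    show "g \<in> cube (2 * M) (\<lambda>l. 2 ^ M * m l + m' l)" unfolding mem_cube
    proof (intro allI impI)
      fix l t assume t: "t < 2 * M"
      show "g l t = bit (2 ^ M * m l + m' l) (2 * M - 1 - t)"
      proof (cases "t < M")
        case True
        then have "2 * M - 1 - t - M = M - 1 - t" by simp
        then show ?thesis using g True unfolding mem_cube by (auto simp: b)
      next
        case False
        then obtain u where u: "t = u + M" "u < M" using t by (metis add.commute less_imp_add_positive mult_2 nat_add_left_cancel_less not_less le_add_diff_inverse2)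
        then have "2 * M - 1 - t = M - 1 - u" by simp
        then show ?thesis using g u unfolding mem_cube shiftp_def by (auto simp: b)
      qed
    qed
  qed
qed

lemma Fs_iff: "g \<in> Fs (Suc i) \<longleftrightarrow> cons i g"
proof -
  let ?M = "ms' i"
  have ms: "ms (Suc i) = ?M" by (simp add: ms_def)
  show ?thesis
  proof
    assume "g \<in> Fs (Suc i)"
    then obtain m m' where mm: "m \<in> idx ?M" "m' \<in> idx ?M"
      and g: "g \<in> cube (2 * ?M) (\<lambda>l. 2 ^ ?M * m l + m' l)" "Rk (2 * ?M) g = Wc ?M m m'"
      unfolding Fs_def ms by blast
    have c: "g \<in> cube ?M m" "shiftp ?M g \<in> cube ?M m'" using cube2[OF mm(2)] g(1) by auto
    have nm: "numv ?M g = m" using c(1) cube_num_iff[OF mm(1)] by simp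
    have "Wc ?M m m' = walshv m (shiftp ?M g)"
      unfolding Wc_def walshv_def
    proof (rule prod.cong[OF refl], rule walsh_W0)
      fix l t show "m l < 2 ^ ?M" using mm(1) by (simp add: idx_def)
      assume "t < ?M" then show "cube_pt ?M m' l t = shiftp ?M g l t" using cube_agree[OF c(2)] by simp
    qed
    then show "cons i g" using g(2) nm by (simp add: cons_def rhs_def Rk_eq)
  next
    assume c: "cons i g"
    let ?m = "numv ?M g" and ?m' = "numv ?M (shiftp ?M g)"
    have g1: "g \<in> cube (2 * ?M) (\<lambda>l. 2 ^ ?M * ?m l + ?m' l)"
      using cube2[OF numv_idx] cube_numv by blast
    have "Wc ?M ?m ?m' = walshv ?m (shiftp ?M g)"
      unfolding Wc_def walshv_def
    proof (rule prod.cong[OF refl], rule walsh_W0)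
      fix l t show "?m l < 2 ^ ?M" by (simp add: numv_def num_lt)
      assume "t < ?M" then show "cube_pt ?M ?m' l t = shiftp ?M g l t" using cube_agree[OF cube_numv[of "shiftp ?M g" ?M]] by simp
    qed
    then have "Rk (2 * ?M) g = Wc ?M ?m ?m'" using c by (simp add: cons_def rhs_def Rk_eq)
    then show "g \<in> Fs (Suc i)" unfolding Fs_def ms using g1 numv_idx by blast
  qed
qed

lemma Fset_iff: "g \<in> Fset \<longleftrightarrow> (\<forall>i. cons i g)"
proof -
  have "g \<in> Fset \<longleftrightarrow> (\<forall>s\<in>{1..}. g \<in> Fs s)" by (simp add: Fset_def)
  also have "\<dots> \<longleftrightarrow> (\<forall>i. g \<in> Fs (Suc i))" by (metis Suc_le_eq atLeast_iff not0_implies_Suc not_one_le_zero zero_less_Suc One_nat_def Suc_le_mono le0)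
  finally show ?thesis by (simp add: Fs_iff)
qed

lemma Ftil_iff: "g \<in> Ftil s \<longleftrightarrow> (\<forall>i<s. cons i g)"
proof -
  have "g \<in> Ftil s \<longleftrightarrow> (\<forall>k\<in>{1..s}. g \<in> Fs k)" by (simp add: Ftil_def)
  also have "\<dots> \<longleftrightarrow> (\<forall>i<s. g \<in> Fs (Suc i))"
    by (auto simp: Suc_le_eq) (metis One_nat_def Suc_le_lessD Suc_pred le_eq_less_or_eq less_Suc_eq_le)
  finally show ?thesis by (simp add: Fs_iff)
qed

lemma rhs_dep: "(\<And>l t. t < 2 * M \<Longrightarrow> x l t = y l t) \<Longrightarrow> rhs M x = rhs M y"
proof -
  assume a: "\<And>l t. t < 2 * M \<Longrightarrow> x l t = y l t"
  have n: "numv M x = numv M y" using a by (intro numv_cong) simp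
  show ?thesis unfolding rhs_def n walshv_def
    by (rule prod.cong[OF refl], rule walsh_W0[of _ M]) (auto simp: numv_def num_lt shiftp_def a)
qed

lemma lhs_dep: "(\<And>l. x l P = y l P) \<Longrightarrow> lhsP P x = lhsP P y"
  by (simp add: lhsP_def)

lemma cons_dep: "(\<And>l t. t \<le> 2 * ms' i \<Longrightarrow> x l t = y l t) \<Longrightarrow> cons i x = cons i y"
  unfolding cons_def using lhs_dep[of x "2 * ms' i" y] rhs_dep[of "ms' i" x y] by simp

lemma Sat_dep: "(\<And>l t. t < k \<Longrightarrow> x l t = y l t) \<Longrightarrow> Sat k x = Sat k y"
  unfolding Sat_def using cons_dep by (metis le_less_trans)

lemma ms'_ge: "i \<le> ms' i"
  by (induction i) auto

lemma ms'_2less: "i < j \<Longrightarrow> 2 * ms' i < ms' j"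
proof (induction j)
  case 0 then show ?case by simp
next
  case (Suc j)
  then show ?case by (cases "i = j") auto
qed

lemma ms'_less: "i < j \<Longrightarrow> ms' i < ms' j"
  using ms'_2less by fastforce

lemma ms'_le_iff: "ms' i \<le> ms' j \<longleftrightarrow> i \<le> j"
  by (metis ms'_less not_less le_less)

lemma lhsP_pm: "lhsP P g = 1 \<or> lhsP P g = -1"
proof -
  have "lhsP P g * lhsP P g = 1" unfolding lhsP_def prod.distrib[symmetric] by (rule prod.neutral) auto
  then have "(lhsP P g - 1) * (lhsP P g + 1) = 0" by (simp add: algebra_simps)
  then show ?thesis by auto
qed

lemma rhs_pm: "rhs M g = 1 \<or> rhs M g = -1"
  by (simp add: rhs_def walshv_pm)



primrec extp :: "nat \<Rightarrow> 'd::finite pt \<Rightarrow> 'd \<Rightarrow> nat \<Rightarrow> 'd pt" where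
  "extp k x l0 0 = (\<lambda>l t. t < k \<and> x l t)"
| "extp k x l0 (Suc i) = (if 2 * ms' i < k then extp k x l0 i else
     (if cons i ((extp k x l0 i)(l0 := (extp k x l0 i l0)(2 * ms' i := False)))
      then (extp k x l0 i)(l0 := (extp k x l0 i l0)(2 * ms' i := False))
      else (extp k x l0 i)(l0 := (extp k x l0 i l0)(2 * ms' i := True))))"

lemma flip_cons:
  fixes y :: "'d::finite pt"
  assumes "\<not> cons i (y(l0 := (y l0)(2 * ms' i := False)))"
  shows "cons i (y(l0 := (y l0)(2 * ms' i := True)))"
proof -
  let ?P = "2 * ms' i"
  let ?y0 = "y(l0 := (y l0)(?P := False))" and ?y1 = "y(l0 := (y l0)(?P := True))"
  have r: "rhs (ms' i) ?y1 = rhs (ms' i) ?y0" by (rule rhs_dep) auto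
  have f: "(\<Prod>l\<in>UNIV. if g l ?P then -1 else 1 :: real) = (if g l0 ?P then -1 else 1) * (\<Prod>l\<in>UNIV - {l0}. if g l ?P then -1 else 1)" for g :: "'d pt"
    by (rule prod.remove) auto
  have e: "(\<Prod>l\<in>UNIV - {l0}. if ?y1 l ?P then -1 else 1 :: real) = (\<Prod>l\<in>UNIV - {l0}. if ?y0 l ?P then -1 else 1)"
    by (rule prod.cong) auto
  have l: "lhsP ?P ?y1 = - lhsP ?P ?y0" unfolding lhsP_def f[of ?y1] f[of ?y0] e by simp
  have "lhsP ?P ?y0 \<noteq> rhs (ms' i) ?y0" using assms by (simp add: cons_def)
  then have "lhsP ?P ?y1 = rhs (ms' i) ?y1" using l r lhsP_pm[of ?P ?y0] rhs_pm[of "ms' i" ?y0] by auto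
  then show ?thesis by (simp add: cons_def)
qed

lemma E1: "t < k \<Longrightarrow> extp k x l0 i l t = x l t"
  by (induction i) auto

lemma E2: "t \<noteq> 2 * ms' i \<Longrightarrow> extp k x l0 (Suc i) l t = extp k x l0 i l t"
  by auto

lemma E3:
  assumes tl: "t < 2 * ms' i" and ii: "i \<le> i'"
  shows "extp k x l0 i' l t = extp k x l0 i l t"
  using ii
proof (induction i' rule: dec_induct)
  case base then show ?case by simp
next
  case (step j)
  have "ms' i \<le> ms' j" using step(1) ms'_le_iff by simp
  then have "t \<noteq> 2 * ms' j" using tl by simp
  then show ?case using E2 step.IH by metis
qed

lemma E4: "Sat k x \<Longrightarrow> cons i (extp k x l0 (Suc i))"
proof (cases "2 * ms' i < k")
  case True
  assume s: "Sat k x"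
  have "cons i (extp k x l0 (Suc i)) = cons i x"
  proof (rule cons_dep)
    fix l t assume "t \<le> 2 * ms' i"
    then have "t < k" using True by simp
    then show "extp k x l0 (Suc i) l t = x l t" using True E1 by simp
  qed
  then show ?thesis using s True by (simp add: Sat_def)
next
  case False
  then show ?thesis using flip_cons by auto
qed

lemma Ext:
  fixes x :: "'d::finite pt"
  assumes "Sat k x"
  shows "\<exists>g. (\<forall>i. cons i g) \<and> (\<forall>l t. t < k \<longrightarrow> g l t = x l t)"
proof -
  obtain l0 :: 'd where True by simp
  define G where "G = (\<lambda>l t. extp k x l0 (Suc t) l t)"
  have GA: "G l t = extp k x l0 (Suc i) l t" if "t \<le> 2 * ms' i" for l t i
  proof -
    have a: "t < 2 * ms' (Suc i)" using that ms'_2less[of i "Suc i"] by simp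
    have b: "t < 2 * ms' (Suc t)" using ms'_ge[of "Suc t"] by simp
    show ?thesis
    proof (cases "t \<le> i")
      case True
      have "extp k x l0 (Suc i) l t = extp k x l0 (Suc t) l t" by (rule E3[OF b]) (use True in simp)
      then show ?thesis unfolding G_def by simp
    next
      case False
      have "extp k x l0 (Suc t) l t = extp k x l0 (Suc i) l t" by (rule E3[OF a]) (use False in simp)
      then show ?thesis unfolding G_def by simp
    qed
  qed
  have "cons i G" for i
  proof -
    have "cons i G = cons i (extp k x l0 (Suc i))" by (rule cons_dep) (simp add: GA)
    then show ?thesis using E4[OF assms] by simp
  qed
  moreover have "\<forall>l t. t < k \<longrightarrow> G l t = x l t" by (simp add: G_def E1)
  ultimately show ?thesis by blast
qed

lemma meets_iff: "cube k m \<inter> (Fset :: 'd::finite pt set) \<noteq> {} \<longleftrightarrow> Sat k (cube_pt k m :: 'd pt)"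
proof
  assume "cube k m \<inter> (Fset :: 'd::finite pt set) \<noteq> {}"
  then obtain g :: "'d pt" where g: "g \<in> cube k m" "\<forall>i. cons i g" using Fset_iff by blast
  have "Sat k g" using g(2) by (simp add: Sat_def)
  moreover have "Sat k g = Sat k (cube_pt k m)" by (rule Sat_dep) (use g(1) in \<open>simp add: cube_agree\<close>)
  ultimately show "Sat k (cube_pt k m :: 'd pt)" by simp
next
  assume "Sat k (cube_pt k m :: 'd pt)"
  then obtain g :: "'d pt" where g: "\<forall>i. cons i g" "\<forall>l t. t < k \<longrightarrow> g l t = cube_pt k m l t"
    using Ext by blast
  have "g \<in> cube k m" using g(2) by (simp add: mem_cube cube_pt_def)
  then show "cube k m \<inter> (Fset :: 'd::finite pt set) \<noteq> {}" using g(1) Fset_iff by blast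
qed

lemma idx_PiE: "idx k = PiE UNIV (\<lambda>_. {..<2 ^ k})"
  by (auto simp: idx_def PiE_def extensional_def Pi_def)

lemma finite_idx: "finite (idx k :: ('d::finite) vec set)"
  by (simp add: idx_PiE finite_PiE)

lemma card_idx: "card (idx k :: ('d::finite) vec set) = 2 ^ (k * card (UNIV :: 'd set))"
  by (simp add: idx_PiE card_PiE power_mult)

definition parv :: "'d::finite vec \<Rightarrow> real" where
  "parv \<sigma> = (\<Prod>l\<in>UNIV. if odd (\<sigma> l) then -1 else 1)"

lemma parv_pm: "parv \<sigma> = 1 \<or> parv \<sigma> = -1"
proof -
  have "parv \<sigma> * parv \<sigma> = 1" unfolding parv_def prod.distrib[symmetric] by (rule prod.neutral) auto
  then have "(parv \<sigma> - 1) * (parv \<sigma> + 1) = 0" by (simp add: algebra_simps)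
  then show ?thesis by auto
qed

lemma card_par2:
  assumes c: "c = 1 \<or> c = -1"
  shows "2 * card {\<sigma> \<in> idx 1 :: ('d::finite) vec set. parv \<sigma> = c} = 2 ^ card (UNIV :: 'd set)"
proof -
  obtain l0 :: 'd where True by simp
  define \<phi> where "\<phi> = (\<lambda>\<sigma> :: 'd vec. \<sigma>(l0 := 1 - \<sigma> l0))"
  have f: "(\<Prod>l\<in>UNIV. if odd (\<sigma> l) then -1 else 1 :: real) = (if odd (\<sigma> l0) then -1 else 1) * (\<Prod>l\<in>UNIV - {l0}. if odd (\<sigma> l) then -1 else 1)" for \<sigma> :: "'d vec"
    by (rule prod.remove) auto
  have pf: "parv (\<phi> \<sigma>) = - parv \<sigma>" if "\<sigma> \<in> idx 1" for \<sigma>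
  proof -
    have "\<sigma> l0 < 2" using that by (simp add: idx_def)
    then have o: "odd (1 - \<sigma> l0) \<longleftrightarrow> \<not> odd (\<sigma> l0)" by (cases "\<sigma> l0") auto
    have e: "(\<Prod>l\<in>UNIV - {l0}. if odd (\<phi> \<sigma> l) then -1 else 1 :: real) = (\<Prod>l\<in>UNIV - {l0}. if odd (\<sigma> l) then -1 else 1)"
      by (rule prod.cong) (auto simp: \<phi>_def)
    show ?thesis unfolding parv_def f[of "\<phi> \<sigma>"] f[of \<sigma>] e using o by (simp add: \<phi>_def)
  qed
  have pi: "\<phi> \<sigma> \<in> idx 1" "\<phi> (\<phi> \<sigma>) = \<sigma>" if "\<sigma> \<in> idx 1" for \<sigma>
  proof -
    have "\<sigma> l0 < 2" using that by (simp add: idx_def)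
    then have "1 - (1 - \<sigma> l0) = \<sigma> l0" by arith
    then show "\<phi> \<sigma> \<in> idx 1" "\<phi> (\<phi> \<sigma>) = \<sigma>" using that by (auto simp: \<phi>_def idx_def)
  qed
  let ?A = "{\<sigma> \<in> idx 1 :: 'd vec set. parv \<sigma> = c}" and ?B = "{\<sigma> \<in> idx 1 :: 'd vec set. parv \<sigma> = - c}"
  have "bij_betw \<phi> ?A ?B"
    by (rule bij_betw_byWitness[where f'=\<phi>]) (auto simp: pf pi pf[unfolded One_nat_def] pi[unfolded One_nat_def])
  then have cAB: "card ?A = card ?B" by (rule bij_betw_same_card)
  have "idx 1 = ?A \<union> ?B"
  proof (rule set_eqI)
    fix x show "x \<in> idx 1 \<longleftrightarrow> x \<in> ?A \<union> ?B" using c parv_pm[of x] by auto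
  qed
  moreover have "?A \<inter> ?B = {}" using c by auto
  ultimately have "card (idx 1 :: 'd vec set) = card ?A + card ?B"
    using finite_idx by (metis (no_types, lifting) card_Un_disjoint finite_Un)
  moreover have "card (idx 1 :: 'd vec set) = 2 ^ card (UNIV :: 'd set)" using card_idx[of 1] by simp
  ultimately show ?thesis using cAB by linarith
qed

lemma card_par:
  assumes c: "c = 1 \<or> c = -1"
  shows "card {\<sigma> \<in> idx 1 :: ('d::finite) vec set. parv \<sigma> = c} = 2 ^ (card (UNIV :: 'd set) - 1)"
proof -
  have "card (UNIV :: 'd set) > 0" by (simp add: card_gt_0_iff)
  then have "(2::nat) ^ card (UNIV :: 'd set) = 2 * 2 ^ (card (UNIV :: 'd set) - 1)" by (metis Suc_diff_1 power_Suc)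
  then show ?thesis using card_par2[OF c, where 'd='d] by simp
qed

lemma cpt_Suc:
  assumes "\<And>l. c l < 2"
  shows "cube_pt (Suc k) (\<lambda>l. c l + 2 * a l) = (\<lambda>l t. if t < k then cube_pt k a l t else t = k \<and> odd (c l))"
proof (intro ext)
  fix l t
  show "cube_pt (Suc k) (\<lambda>l. c l + 2 * a l) l t = (if t < k then cube_pt k a l t else t = k \<and> odd (c l))"
    using bit_2x[OF assms[of l], of "a l" "k - t"] by (auto simp: cube_pt_def)
qed

definition cnt :: "nat \<Rightarrow> nat" where "cnt k = card {i. 2 * ms' i < k}"

lemma finite_cnt: "finite {i. 2 * ms' i < k}"
  by (rule finite_subset[of _ "{..<k}"]) (auto dest: order.strict_trans1[OF _ ] simp: ms'_ge intro: le_less_trans[OF ms'_ge])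

lemma Sat_Suc: "Sat (Suc k) w \<longleftrightarrow> Sat k w \<and> (\<forall>i. 2 * ms' i = k \<longrightarrow> cons i w)"
  by (auto simp: Sat_def less_Suc_eq)

lemma tauE_formula:
  "m \<in> idx k \<Longrightarrow> tauE (Fset :: 'd::finite pt set) k m =
     (if Sat k (cube_pt k m :: 'd pt) then 2 ^ cnt k / 2 ^ (card (UNIV :: 'd set) * k) else 0)"
proof (induction k arbitrary: m)
  case 0
  have "Sat 0 (cube_pt 0 m :: 'd pt)" by (simp add: Sat_def)
  then have "cube 0 m \<inter> (Fset :: 'd pt set) \<noteq> {}" using meets_iff by blast
  moreover have "cnt 0 = 0" by (simp add: cnt_def)
  ultimately show ?case using \<open>Sat 0 (cube_pt 0 m :: 'd pt)\<close> by simp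
next
  case (Suc k)
  let ?d = "card (UNIV :: 'd set)"
  define a where "a = (\<lambda>l. m l div 2)"
  have aidx: "a \<in> idx k" unfolding idx_def a_def
  proof (intro CollectI allI)
    fix l have "m l < 2 ^ k * 2" using Suc.prems by (simp add: idx_def mult.commute)
    then show "m l div 2 < 2 ^ k" by (rule less_mult_imp_div_less)
  qed
  let ?y = "cube_pt k a :: 'd pt"
  have mrep: "m = (\<lambda>l. m l mod 2 + 2 * a l)" by (auto simp: a_def)
  have xeq: "cube_pt (Suc k) m = (\<lambda>l t. if t < k then ?y l t else t = k \<and> odd (m l mod 2))"
    by (subst mrep, rule cpt_Suc) simp
  show ?case
  proof (cases "Sat (Suc k) (cube_pt (Suc k) m :: 'd pt)")
    case False
    then have "cube (Suc k) m \<inter> (Fset :: 'd pt set) = {}" using meets_iff by blast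
    then show ?thesis using False by simp
  next
    case True
    then have ne: "cube (Suc k) m \<inter> (Fset :: 'd pt set) \<noteq> {}" using meets_iff by blast
    have "Sat k (cube_pt (Suc k) m :: 'd pt)" using True Sat_Suc by blast
    moreover have "Sat k (cube_pt (Suc k) m :: 'd pt) = Sat k ?y" by (rule Sat_dep) (simp add: xeq)
    ultimately have Sy: "Sat k ?y" by simp
    have IH: "tauE (Fset :: 'd pt set) k a = 2 ^ cnt k / 2 ^ (?d * k)" using Suc.IH[OF aidx] Sy by simp
    define z where "z = (\<lambda>\<sigma> :: 'd vec. \<lambda>l t. if t < k then ?y l t else t = k \<and> odd (\<sigma> l))"
    have zeq: "cube_pt (Suc k) (\<lambda>l. 2 * (m l div 2) + \<sigma> l) = z \<sigma>" if "\<sigma> \<in> idx 1" for \<sigma>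
    proof -
      have "(\<lambda>l. 2 * (m l div 2) + \<sigma> l) = (\<lambda>l. \<sigma> l + 2 * a l)" by (auto simp: a_def)
      then show ?thesis using that cpt_Suc[of \<sigma> k a] by (simp add: idx_def z_def)
    qed
    have cidx: "(\<lambda>l. 2 * (m l div 2) + \<sigma> l) \<in> idx (Suc k)" if "\<sigma> \<in> idx 1" for \<sigma>
    proof -
      have "\<forall>l. m l div 2 < 2 ^ k" using aidx by (simp add: idx_def a_def)
      then show ?thesis unfolding idx_def
      proof (intro CollectI allI)
        fix l assume "\<forall>l. m l div 2 < 2 ^ k"
        then have "m l div 2 < 2 ^ k" by simp
        moreover have "\<sigma> l < 2" using that by (simp add: idx_def)
        ultimately show "2 * (m l div 2) + \<sigma> l < 2 ^ Suc k" by simp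
      qed
    qed
    have Szk: "Sat k (z \<sigma>)" for \<sigma> using Sy by (subst Sat_dep[of k _ ?y]) (auto simp: z_def)
    have setq: "{\<sigma> \<in> idx 1. cube (Suc k) (\<lambda>l. 2 * (m l div 2) + \<sigma> l) \<inter> (Fset :: 'd pt set) \<noteq> {}}
        = {\<sigma> \<in> idx 1. \<forall>i. 2 * ms' i = k \<longrightarrow> cons i (z \<sigma>)}"
    proof -
      have "(cube (Suc k) (\<lambda>l. 2 * (m l div 2) + \<sigma> l) \<inter> (Fset :: 'd pt set) \<noteq> {}) = (\<forall>i. 2 * ms' i = k \<longrightarrow> cons i (z \<sigma>))"
        if "\<sigma> \<in> idx 1" for \<sigma>
        using meets_iff[of "Suc k" "\<lambda>l. 2 * (m l div 2) + \<sigma> l"] zeq[OF that] Sat_Suc[of k "z \<sigma>"] Szk[of \<sigma>] by simp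
      then show ?thesis by blast
    qed
    have fin: "finite {i. 2 * ms' i < k}" by (rule finite_cnt)
    have d1: "(2::real) ^ ?d = 2 * 2 ^ (?d - 1)"
    proof -
      have "?d > 0" by (simp add: card_gt_0_iff)
      then show ?thesis by (metis Suc_diff_1 power_Suc)
    qed
    have t1: "tauE (Fset :: 'd pt set) (Suc k) m = tauE (Fset :: 'd pt set) k a /
        real (card {\<sigma> \<in> idx 1. cube (Suc k) (\<lambda>l. 2 * (m l div 2) + \<sigma> l) \<inter> (Fset :: 'd pt set) \<noteq> {}})"
      unfolding tauE.simps(2) if_not_P[OF ne] a_def ..
    show ?thesis
    proof (cases "\<exists>i. 2 * ms' i = k")
      case True
      then obtain i where i: "2 * ms' i = k" by blast
      have lz: "lhsP k (z \<sigma>) = parv \<sigma>" for \<sigma> by (simp add: lhsP_def parv_def z_def)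
      have rz: "rhs (ms' i) (z \<sigma>) = rhs (ms' i) ?y" for \<sigma> by (rule rhs_dep) (use i in \<open>simp add: z_def\<close>)
      have uniq: "2 * ms' j = k \<Longrightarrow> j = i" for j
      proof -
        assume "2 * ms' j = k"
        then have "ms' j = ms' i" using i by simp
        then have "j \<le> i" "i \<le> j" using ms'_le_iff[of j i] ms'_le_iff[of i j] by simp_all
        then show "j = i" by simp
      qed
      have pe: "(\<forall>j. 2 * ms' j = k \<longrightarrow> cons j (z \<sigma>)) \<longleftrightarrow> parv \<sigma> = rhs (ms' i) ?y" for \<sigma>
      proof -
        have "(\<forall>j. 2 * ms' j = k \<longrightarrow> cons j (z \<sigma>)) \<longleftrightarrow> cons i (z \<sigma>)" using uniq i by blast
        also have "\<dots> \<longleftrightarrow> lhsP k (z \<sigma>) = rhs (ms' i) (z \<sigma>)" unfolding cons_def i ..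
        finally show ?thesis unfolding lz rz .
      qed
      have "{\<sigma> \<in> idx 1. \<forall>i. 2 * ms' i = k \<longrightarrow> cons i (z \<sigma>)} = {\<sigma> \<in> idx 1. parv \<sigma> = rhs (ms' i) ?y}"
        unfolding pe ..
      then have cd: "card {\<sigma> \<in> idx 1. cube (Suc k) (\<lambda>l. 2 * (m l div 2) + \<sigma> l) \<inter> (Fset :: 'd pt set) \<noteq> {}} = 2 ^ (?d - 1)"
        using setq card_par[OF rhs_pm[of "ms' i" ?y], where 'd='d] by simp
      have "{j. 2 * ms' j < Suc k} = insert i {j. 2 * ms' j < k}"
      proof (rule set_eqI)
        fix j
        have "2 * ms' j < Suc k \<longleftrightarrow> 2 * ms' j = k \<or> 2 * ms' j < k" by linarith
        also have "\<dots> \<longleftrightarrow> j = i \<or> 2 * ms' j < k" using uniq i by blast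
        finally show "j \<in> {j. 2 * ms' j < Suc k} \<longleftrightarrow> j \<in> insert i {j. 2 * ms' j < k}" by simp
      qed
      then have cS: "cnt (Suc k) = Suc (cnt k)" using fin i by (simp add: cnt_def)
      have "tauE (Fset :: 'd pt set) (Suc k) m = (2 ^ cnt k / 2 ^ (?d * k)) / 2 ^ (?d - 1)"
        unfolding t1 cd IH by simp
      also have "\<dots> = 2 ^ cnt (Suc k) / 2 ^ (?d * Suc k)"
        unfolding cS by (simp add: power_add d1 field_simps)
      finally show ?thesis using \<open>Sat (Suc k) (cube_pt (Suc k) m)\<close> by simp
    next
      case False
      have "{\<sigma> \<in> idx 1. \<forall>i. 2 * ms' i = k \<longrightarrow> cons i (z \<sigma>)} = idx 1" using False by auto
      then have cd: "card {\<sigma> \<in> idx 1. cube (Suc k) (\<lambda>l. 2 * (m l div 2) + \<sigma> l) \<inter> (Fset :: 'd pt set) \<noteq> {}} = 2 ^ ?d"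
        using setq card_idx[of 1, where 'd='d] by simp
      have "{j. 2 * ms' j < Suc k} = {j. 2 * ms' j < k}" using False by (auto simp: less_Suc_eq)
      then have cS: "cnt (Suc k) = cnt k" by (simp add: cnt_def)
      have "tauE (Fset :: 'd pt set) (Suc k) m = (2 ^ cnt k / 2 ^ (?d * k)) / 2 ^ ?d"
        unfolding t1 cd IH by simp
      also have "\<dots> = 2 ^ cnt (Suc k) / 2 ^ (?d * Suc k)"
        unfolding cS by (simp add: power_add field_simps)
      finally show ?thesis using \<open>Sat (Suc k) (cube_pt (Suc k) m)\<close> by simp
    qed
  qed
qed



lemma bit_div_pow: "bit ((x::nat) div 2 ^ a) i = bit x (i + a)"
  by (simp add: bit_iff_odd div_mult2_eq power_add mult.commute)

lemma SubCube:
  assumes rk: "r \<le> k" and m: "m \<in> idx k" and m0: "m0 \<in> idx r"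
  shows "cube k m \<subseteq> cube r m0 \<longleftrightarrow> (\<forall>l. m l div 2 ^ (k - r) = m0 l)"
proof
  assume sub: "cube k m \<subseteq> cube r m0"
  have c: "cube_pt k m \<in> cube r m0" using sub cube_pt_mem by blast
  show "\<forall>l. m l div 2 ^ (k - r) = m0 l"
  proof
    fix l
    show "m l div 2 ^ (k - r) = m0 l"
    proof (rule nat_eq_bits[of _ r])
      have "m l < 2 ^ r * 2 ^ (k - r)" using m rk by (simp add: idx_def power_add[symmetric])
      then show "m l div 2 ^ (k - r) < 2 ^ r" by (rule less_mult_imp_div_less)
      show "m0 l < 2 ^ r" using m0 by (simp add: idx_def)
      fix i assume i: "i < r"
      have "cube_pt k m l (r - 1 - i) = bit (m0 l) (r - 1 - (r - 1 - i))"
        using c i unfolding mem_cube by simp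
      moreover have "r - 1 - (r - 1 - i) = i" using i by simp
      moreover have "k - 1 - (r - 1 - i) = i + (k - r)" using i rk by simp
      moreover have "r - 1 - i < k" using i rk by simp
      ultimately show "bit (m l div 2 ^ (k - r)) i = bit (m0 l) i"
        by (simp add: bit_div_pow cube_pt_def)
    qed
  qed
next
  assume e: "\<forall>l. m l div 2 ^ (k - r) = m0 l"
  show "cube k m \<subseteq> cube r m0"
  proof
    fix g assume g: "g \<in> cube k m"
    show "g \<in> cube r m0" unfolding mem_cube
    proof (intro allI impI)
      fix l t assume t: "t < r"
      have "g l t = bit (m l) (k - 1 - t)" using g t rk unfolding mem_cube by simp
      also have "k - 1 - t = (r - 1 - t) + (k - r)" using t rk by simp
      also have "bit (m l) \<dots> = bit (m l div 2 ^ (k - r)) (r - 1 - t)" by (simp add: bit_div_pow)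
      finally show "g l t = bit (m0 l) (r - 1 - t)" using e by simp
    qed
  qed
qed

lemma less_pow_bits: "(\<And>i. M \<le> i \<Longrightarrow> \<not> bit (y::nat) i) \<Longrightarrow> y < 2 ^ M"
proof -
  assume a: "\<And>i. M \<le> i \<Longrightarrow> \<not> bit y i"
  have "take_bit M y = y"
  proof (rule bit_eq_iff[THEN iffD2], intro allI impI)
    fix n show "bit (take_bit M y) n = bit y n" using a[of n] by (cases "n < M") (auto simp: bit_take_bit_iff)
  qed
  then show ?thesis by (metis take_bit_nat_less_exp)
qed

lemma walshv_flip:
  fixes g :: "'d::finite pt"
  shows "walshv n (g(l := (g l)(t := \<not> g l t))) = (if bit (n l) t then -1 else 1) * walshv n g"
proof -
  have f: "walshv n h = walsh (n l) (h l) * (\<Prod>l'\<in>UNIV - {l}. walsh (n l') (h l'))" for h :: "'d pt"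
    unfolding walshv_def by (rule prod.remove) auto
  have e: "(\<Prod>l'\<in>UNIV - {l}. walsh (n l') ((g(l := (g l)(t := \<not> g l t))) l')) = (\<Prod>l'\<in>UNIV - {l}. walsh (n l') (g l'))"
    by (rule prod.cong) auto
  show ?thesis unfolding f[of "g(l := (g l)(t := \<not> g l t))"] f[of g] e by (simp add: walsh_flip)
qed

lemma Orth:
  fixes p m0 :: "'d::finite vec"
  assumes p: "p \<in> idx M" and m0: "m0 \<in> idx M"
  shows "(\<Sum>m'\<in>idx M. Wc M p m' * Wc M m0 m') = (if p = m0 then 2 ^ (M * card (UNIV :: 'd set)) else 0)"
proof (cases "p = m0")
  case True
  then show ?thesis by (simp add: Wc_def walshv_sq card_idx)
next
  case False
  then obtain l where l: "p l \<noteq> m0 l" by auto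
  have "\<exists>b<M. bit (p l) b \<noteq> bit (m0 l) b"
  proof (rule ccontr)
    assume "\<not> (\<exists>b<M. bit (p l) b \<noteq> bit (m0 l) b)"
    then have "p l = m0 l" using p m0 by (intro nat_eq_bits[of _ M]) (auto simp: idx_def)
    then show False using l by simp
  qed
  then obtain b where b: "b < M" "bit (p l) b \<noteq> bit (m0 l) b" by blast
  define \<phi> where "\<phi> = (\<lambda>m' :: 'd vec. m'(l := xor (m' l) (2 ^ (M - 1 - b))))"
  define f where "f = (\<lambda>m'. Wc M p m' * Wc M m0 m')"
  have bx: "bit (xor (y::nat) (2 ^ (M - 1 - b))) i = (bit y i \<noteq> (i = M - 1 - b))" for y i
    by (auto simp: bit_xor_iff bit_exp_iff)
  have phi_idx: "\<phi> m' \<in> idx M" if "m' \<in> idx M" for m'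
  proof -
    have "xor (m' l) (2 ^ (M - 1 - b)) < 2 ^ M"
    proof (rule less_pow_bits)
      fix i assume "M \<le> i"
      moreover have "\<not> bit (m' l) i"
      proof
        assume "bit (m' l) i"
        moreover have "m' l < 2 ^ M" using that by (simp add: idx_def)
        ultimately have "i < M" using bit_lt by blast
        then show False using \<open>M \<le> i\<close> by simp
      qed
      ultimately show "\<not> bit (xor (m' l) (2 ^ (M - 1 - b))) i" using b(1) bx[of "m' l" i] by simp
    qed
    then show ?thesis using that by (auto simp: \<phi>_def idx_def)
  qed
  have phi_inv: "\<phi> (\<phi> m') = m'" for m'
  proof -
    have "xor (xor (m' l) (2 ^ (M - 1 - b))) (2 ^ (M - 1 - b)) = (m' l :: nat)"
      by (rule bit_eq_iff[THEN iffD2]) (auto simp: bit_xor_iff)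
    then show ?thesis by (auto simp: \<phi>_def)
  qed
  have cpt: "cube_pt M (\<phi> m') = (cube_pt M m')(l := (cube_pt M m' l)(b := \<not> cube_pt M m' l b))" for m'
  proof (intro ext)
    fix l' t
    show "cube_pt M (\<phi> m') l' t = ((cube_pt M m')(l := (cube_pt M m' l)(b := \<not> cube_pt M m' l b))) l' t"
    proof (cases "l' = l")
      case True
      have "t < M \<Longrightarrow> (M - 1 - t = M - 1 - b) = (t = b)" using b(1) by auto
      then show ?thesis using True b(1) by (auto simp: cube_pt_def \<phi>_def bit_xor_iff bit_exp_iff)
    next
      case False
      then show ?thesis by (simp add: cube_pt_def \<phi>_def)
    qed
  qed
  have fneg: "f (\<phi> m') = - f m'" for m'
    unfolding f_def Wc_def cpt walshv_flip using b(2) by auto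
  have "sum f (idx M) = sum (\<lambda>m'. f (\<phi> m')) (idx M)"
    by (rule sum.reindex_bij_witness[where i=\<phi> and j=\<phi>]) (auto simp: phi_inv phi_idx)
  also have "\<dots> = - sum f (idx M)" by (simp add: fneg sum_negf)
  finally have "sum f (idx M) = 0" by simp
  then show ?thesis using False by (simp add: f_def)
qed



lemma XP:
  fixes m0 m' \<sigma> :: "'d::finite vec"
  assumes m0: "m0 \<in> idx M" and m': "m' \<in> idx M" and \<sigma>: "\<sigma> \<in> idx 1"
  shows "cube_pt (Suc (2 * M)) (\<lambda>l. \<sigma> l + 2 * (m' l + 2 ^ M * m0 l)) =
    (\<lambda>l t. if t < M then cube_pt M m0 l t else if t < 2 * M then cube_pt M m' l (t - M) else t = 2 * M \<and> odd (\<sigma> l))"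
proof (intro ext)
  fix l t
  have s2: "\<sigma> l < 2" using \<sigma> by (simp add: idx_def)
  have mM: "m' l < 2 ^ M" using m' by (simp add: idx_def)
  have b1: "bit (\<sigma> l + 2 * (m' l + 2 ^ M * m0 l)) j = (if j = 0 then odd (\<sigma> l) else bit (m' l + 2 ^ M * m0 l) (j - 1))" for j
    by (rule bit_2x[OF s2])
  have b2: "bit (m' l + 2 ^ M * m0 l) j = (if j < M then bit (m' l) j else bit (m0 l) (j - M))" for j
    by (rule bit_plus_pow[OF mM])
  show "cube_pt (Suc (2 * M)) (\<lambda>l. \<sigma> l + 2 * (m' l + 2 ^ M * m0 l)) l t =
    (if t < M then cube_pt M m0 l t else if t < 2 * M then cube_pt M m' l (t - M) else t = 2 * M \<and> odd (\<sigma> l))"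
  proof (cases "t < M")
    case True
    have e1: "Suc (2 * M) - 1 - t \<noteq> 0" "\<not> (Suc (2 * M) - 1 - t - 1 < M)" "Suc (2 * M) - 1 - t - 1 - M = M - 1 - t" using True by auto
    show ?thesis unfolding cube_pt_def b1 b2 using True e1 by simp
  next
    case False
    show ?thesis
    proof (cases "t < 2 * M")
      case True
      have e1: "Suc (2 * M) - 1 - t \<noteq> 0" "Suc (2 * M) - 1 - t - 1 = M - 1 - (t - M)" "M - 1 - (t - M) < M" "t - M < M"
        "Suc (2 * M) - 1 - t - 1 < M"
        using True False by auto
      show ?thesis unfolding cube_pt_def b1 b2 using True False e1 by simp
    next
      case False2: False
      show ?thesis unfolding cube_pt_def b1 using False False2 by auto
    qed
  qed
qed

lemma walsh1: "walsh 1 x = (if x 0 then -1 else 1)"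
  using walsh_pow[of 0 x] by simp

lemma jj_idx:
  fixes m0 m' \<sigma> :: "'d::finite vec"
  assumes m0: "m0 \<in> idx M" and m': "m' \<in> idx M" and \<sigma>: "\<sigma> \<in> idx 1"
  shows "(\<lambda>l. \<sigma> l + 2 * (m' l + 2 ^ M * m0 l)) \<in> idx (Suc (2 * M))"
  unfolding idx_def
proof (intro CollectI allI)
  fix l
  have "m0 l < 2 ^ M" using m0 by (simp add: idx_def)
  then have a: "m0 l + 1 \<le> 2 ^ M" by simp
  have b: "m' l < 2 ^ M" using m' by (simp add: idx_def)
  have "\<sigma> l < 2" using \<sigma> by (simp add: idx_def)
  then have c: "\<sigma> l \<le> 1" by simp
  have "2 ^ M * (m0 l + 1) \<le> (2::nat) ^ M * 2 ^ M" using a by (rule mult_le_mono2)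
  then have "m' l + 2 ^ M * m0 l < 2 ^ M * 2 ^ M" using b by (simp add: algebra_simps)
  then have "m' l + 2 ^ M * m0 l < 2 ^ (2 * M)" by (simp add: power_add[symmetric] mult_2)
  then show "\<sigma> l + 2 * (m' l + 2 ^ M * m0 l) < 2 ^ Suc (2 * M)" using c by simp
qed

lemma Wn_prod:
  fixes m0 m' \<sigma> p q :: "'d::finite vec"
  assumes m0: "m0 \<in> idx M" and m': "m' \<in> idx M" and \<sigma>: "\<sigma> \<in> idx 1"
    and p: "p \<in> idx M" and q: "q \<in> idx M"
    and n: "n = (\<lambda>l. 2 ^ (2 * M) + 2 ^ M * p l + q l)"
  shows "Wc (Suc (2 * M)) n (\<lambda>l. \<sigma> l + 2 * (m' l + 2 ^ M * m0 l)) = Wc M q m0 * Wc M p m' * parv \<sigma>"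
proof -
  let ?X = "cube_pt (Suc (2 * M)) (\<lambda>l. \<sigma> l + 2 * (m' l + 2 ^ M * m0 l))"
  have X: "?X = (\<lambda>l t. if t < M then cube_pt M m0 l t else if t < 2 * M then cube_pt M m' l (t - M) else t = 2 * M \<and> odd (\<sigma> l))"
    by (rule XP[OF m0 m' \<sigma>])
  have w: "walsh (n l) (?X l) = walsh (q l) (cube_pt M m0 l) * walsh (p l) (cube_pt M m' l) * (if odd (\<sigma> l) then -1 else 1)" for l
  proof -
    have ql: "q l < 2 ^ M" and pl: "p l < 2 ^ M" using p q by (auto simp: idx_def)
    have nl: "n l = q l + 2 ^ M * (p l + 2 ^ M)" using n by (simp add: algebra_simps power_add[symmetric] mult_2)
    have e1: "walsh (n l) (?X l) = walsh (q l) (?X l) * walsh (p l + 2 ^ M) (\<lambda>t. ?X l (t + M))"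
      unfolding nl by (rule walsh_W1[OF ql])
    have e2: "walsh (p l + 2 ^ M) (\<lambda>t. ?X l (t + M)) = walsh (p l) (\<lambda>t. ?X l (t + M)) * walsh 1 (\<lambda>t. ?X l (t + M + M))"
      using walsh_W1[OF pl, of 1 "\<lambda>t. ?X l (t + M)"] by simp
    have "walsh (n l) (?X l) = walsh (q l) (?X l) * (walsh (p l) (\<lambda>t. ?X l (t + M)) * walsh 1 (\<lambda>t. ?X l (t + M + M)))"
      using e1 e2 by simp
    moreover have "walsh (q l) (?X l) = walsh (q l) (cube_pt M m0 l)"
      by (rule walsh_W0[OF ql]) (unfold X, simp)
    moreover have "walsh (p l) (\<lambda>t. ?X l (t + M)) = walsh (p l) (cube_pt M m' l)"
      by (rule walsh_W0[OF pl]) (unfold X, simp)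
    moreover have "walsh 1 (\<lambda>t. ?X l (t + M + M)) = (if odd (\<sigma> l) then -1 else 1)"
      unfolding X walsh1 by (simp add: mult_2)
    ultimately show ?thesis by simp
  qed
  show ?thesis unfolding Wc_def walshv_def parv_def w prod.distrib ..
qed

lemma I0_iff:
  fixes m0 :: "'d::finite vec"
  assumes m0: "m0 \<in> idx (ms' s0)"
  shows "cube (ms' s0) m0 \<subseteq> (Ftil s0 :: 'd pt set) \<longleftrightarrow> (\<forall>i<s0. cons i (cube_pt (ms' s0) m0 :: 'd pt))"
proof
  assume "cube (ms' s0) m0 \<subseteq> (Ftil s0 :: 'd pt set)"
  then have "cube_pt (ms' s0) m0 \<in> (Ftil s0 :: 'd pt set)" using cube_pt_mem by blast
  then show "\<forall>i<s0. cons i (cube_pt (ms' s0) m0 :: 'd pt)" using Ftil_iff by blast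
next
  assume a: "\<forall>i<s0. cons i (cube_pt (ms' s0) m0 :: 'd pt)"
  show "cube (ms' s0) m0 \<subseteq> (Ftil s0 :: 'd pt set)"
  proof
    fix g :: "'d pt" assume g: "g \<in> cube (ms' s0) m0"
    have "cons i g" if i: "i < s0" for i
    proof -
      have "cons i g = cons i (cube_pt (ms' s0) m0)"
      proof (rule cons_dep)
        fix l t assume "t \<le> 2 * ms' i"
        then have "t < ms' s0" using ms'_2less[OF i] by simp
        then show "g l t = cube_pt (ms' s0) m0 l t" using cube_agree[OF g] by simp
      qed
      then show ?thesis using a i by simp
    qed
    then show "g \<in> Ftil s0" using Ftil_iff by blast
  qed
qed

lemma cntK: "cnt (Suc (2 * ms' s0)) = Suc s0"
proof -
  have "{i. 2 * ms' i < Suc (2 * ms' s0)} = {..s0}"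
  proof (rule set_eqI)
    fix x
    have "2 * ms' x < Suc (2 * ms' s0) \<longleftrightarrow> ms' x \<le> ms' s0" by linarith
    then show "x \<in> {i. 2 * ms' i < Suc (2 * ms' s0)} \<longleftrightarrow> x \<in> {..s0}" using ms'_le_iff[of x s0] by simp
  qed
  then show ?thesis by (simp add: cnt_def)
qed

lemma hval:
  fixes m0 m' \<sigma> p q :: "'d::finite vec" and s0 :: nat
  defines "M \<equiv> ms' s0"
  assumes m0: "m0 \<in> idx M" and m': "m' \<in> idx M" and \<sigma>: "\<sigma> \<in> idx 1"
    and p: "p \<in> idx M" and q: "q \<in> idx M"
    and n: "n = (\<lambda>l. 2 ^ (2 * M) + 2 ^ M * p l + q l)"
  shows "Wc (Suc (2 * M)) n (\<lambda>l. \<sigma> l + 2 * (m' l + 2 ^ M * m0 l)) *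
         tauE (Fset :: 'd pt set) (Suc (2 * M)) (\<lambda>l. \<sigma> l + 2 * (m' l + 2 ^ M * m0 l))
       = Wc M q m0 * Wc M p m' * parv \<sigma> *
         (if (\<forall>i<s0. cons i (cube_pt M m0 :: 'd pt)) \<and> parv \<sigma> = Wc M m0 m'
          then 2 ^ Suc s0 / 2 ^ (card (UNIV :: 'd set) * Suc (2 * M)) else 0)"
proof -
  let ?X = "cube_pt (Suc (2 * M)) (\<lambda>l. \<sigma> l + 2 * (m' l + 2 ^ M * m0 l)) :: 'd pt"
  have X: "?X = (\<lambda>l t. if t < M then cube_pt M m0 l t else if t < 2 * M then cube_pt M m' l (t - M) else t = 2 * M \<and> odd (\<sigma> l))"
    by (rule XP[OF m0 m' \<sigma>])
  have W: "Wc (Suc (2 * M)) n (\<lambda>l. \<sigma> l + 2 * (m' l + 2 ^ M * m0 l)) = Wc M q m0 * Wc M p m' * parv \<sigma>"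
    by (rule Wn_prod[OF m0 m' \<sigma> p q n])
  have T: "tauE (Fset :: 'd pt set) (Suc (2 * M)) (\<lambda>l. \<sigma> l + 2 * (m' l + 2 ^ M * m0 l)) =
      (if Sat (Suc (2 * M)) ?X then 2 ^ Suc s0 / 2 ^ (card (UNIV :: 'd set) * Suc (2 * M)) else 0)"
    using tauE_formula[OF jj_idx[OF m0 m' \<sigma>]] cntK[of s0] unfolding M_def by simp
  have S1: "Sat (Suc (2 * M)) ?X \<longleftrightarrow> (\<forall>i\<le>s0. cons i ?X)"
    unfolding Sat_def M_def using ms'_le_iff by (auto simp: less_Suc_eq_le)
  have S2: "cons i ?X = cons i (cube_pt M m0)" if i: "i < s0" for i
  proof (rule cons_dep)
    fix l t assume "t \<le> 2 * ms' i"
    then have "t < M" using ms'_2less[OF i] by (simp add: M_def)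
    then show "?X l t = cube_pt M m0 l t" unfolding X by simp
  qed
  have L: "lhsP (2 * M) ?X = parv \<sigma>" unfolding X by (simp add: lhsP_def parv_def)
  have nv: "numv M ?X = m0"
  proof -
    have "numv M ?X = numv M (cube_pt M m0)" by (rule numv_cong) (unfold X, simp)
    then show ?thesis using numv_cube_pt[OF m0] by simp
  qed
  have R: "rhs M ?X = Wc M m0 m'"
    unfolding rhs_def nv Wc_def walshv_def
  proof (rule prod.cong[OF refl], rule walsh_W0[of _ M])
    fix l t show "m0 l < 2 ^ M" using m0 by (simp add: idx_def)
    assume "t < M" then show "shiftp M ?X l t = cube_pt M m' l t" unfolding X by (simp add: shiftp_def)
  qed
  have S3: "cons s0 ?X \<longleftrightarrow> parv \<sigma> = Wc M m0 m'"
    unfolding cons_def M_def[symmetric] L R ..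
  have "Sat (Suc (2 * M)) ?X \<longleftrightarrow> (\<forall>i<s0. cons i (cube_pt M m0 :: 'd pt)) \<and> parv \<sigma> = Wc M m0 m'"
    unfolding S1 using S2 S3 by (auto simp: le_less)
  then show ?thesis unfolding W T by simp
qed



lemma Smain:
  fixes p q m0 :: "'d::finite vec" and s0 :: nat
  defines "M \<equiv> ms' s0"
  assumes p: "p \<in> idx M" and q: "q \<in> idx M" and m0: "m0 \<in> idx M"
    and n: "n = (\<lambda>l. 2 ^ (2 * M) + 2 ^ M * p l + q l)"
  shows "(\<Sum>m\<in>{m \<in> idx (Suc (2 * M)). cube (Suc (2 * M)) m \<subseteq> cube M m0}.
            Wc (Suc (2 * M)) n m * tauE (Fset :: 'd pt set) (Suc (2 * M)) m)
       = 2 ^ Suc s0 / 2 ^ (card (UNIV :: 'd set) * Suc (2 * M)) * 2 ^ (card (UNIV :: 'd set) - 1)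
         * 2 ^ (M * card (UNIV :: 'd set)) * Wc M q m0 * (if m0 = p then 1 else 0)
         * (if cube M m0 \<subseteq> (Ftil s0 :: 'd pt set) then 1 else 0)"
proof -
  let ?K = "Suc (2 * M)"
  let ?d = "card (UNIV :: 'd set)"
  define C :: real where "C = 2 ^ Suc s0 / 2 ^ (?d * ?K)"
  define I0 where "I0 = (\<forall>i<s0. cons i (cube_pt M m0 :: 'd pt))"
  define jj where "jj = (\<lambda>(m' :: 'd vec, \<sigma> :: 'd vec). (\<lambda>l. \<sigma> l + 2 * (m' l + 2 ^ M * m0 l)))"
  define ii where "ii = (\<lambda>m :: 'd vec. ((\<lambda>l. (m l div 2) mod 2 ^ M), (\<lambda>l. m l mod 2)))"
  define f where "f = (\<lambda>m. Wc ?K n m * tauE (Fset :: 'd pt set) ?K m)"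
  let ?S = "{m \<in> idx ?K. cube ?K m \<subseteq> cube M m0}"
  have I0iff: "cube M m0 \<subseteq> (Ftil s0 :: 'd pt set) \<longleftrightarrow> I0"
    unfolding I0_def M_def by (rule I0_iff) (use m0 in \<open>simp add: M_def\<close>)
  have SubK: "m \<in> ?S \<longleftrightarrow> m \<in> idx ?K \<and> (\<forall>l. m l div 2 ^ (Suc M) = m0 l)" for m
  proof -
    have "?K - M = Suc M" by simp
    then show ?thesis using SubCube[of M ?K m m0] m0 by auto
  qed
  have div2: "(c + 2 * y) div 2 = y" "(c + 2 * y) mod 2 = c" if "c < 2" for c y :: nat
    using that by auto
  have reidx: "sum f ?S = sum (f \<circ> jj) (idx M \<times> idx 1)"
  proof (rule sum.reindex_bij_witness[where i=jj and j=ii])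
    fix m :: "'d vec" assume mS: "m \<in> ?S"
    then have md: "m l div 2 ^ Suc M = m0 l" for l using SubK by blast
    show "jj (ii m) = m"
    proof (rule ext)
      fix l
      have "m l div 2 ^ Suc M = m l div 2 div 2 ^ M" by (simp add: div_mult2_eq)
      then have "m0 l = m l div 2 div 2 ^ M" using md by simp
      then have e1: "(m l div 2) mod 2 ^ M + 2 ^ M * m0 l = m l div 2" by simp
      have e2: "m l mod 2 + 2 * (m l div 2) = m l" by simp
      have e3: "jj (ii m) l = m l mod 2 + 2 * ((m l div 2) mod 2 ^ M + 2 ^ M * m0 l)" by (simp add: jj_def ii_def)
      show "jj (ii m) l = m l" by (simp only: e3 e1 e2)
    qed
    show "ii m \<in> idx M \<times> idx 1" by (simp add: ii_def idx_def)
    show "(f \<circ> jj) (ii m) = f m" using \<open>jj (ii m) = m\<close> by simp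
  next
    fix b :: "'d vec \<times> 'd vec" assume bT: "b \<in> idx M \<times> idx 1"
    obtain m' \<sigma> where b: "b = (m', \<sigma>)" and m': "m' \<in> idx M" and \<sigma>: "\<sigma> \<in> idx 1" using bT by auto
    have s2: "\<sigma> l < 2" for l using \<sigma> by (simp add: idx_def)
    have ml: "m' l < 2 ^ M" for l using m' by (simp add: idx_def)
    have jjl: "jj b l = \<sigma> l + 2 * (m' l + 2 ^ M * m0 l)" for l by (simp add: b jj_def)
    have jdiv: "jj b l div 2 = m' l + 2 ^ M * m0 l" for l unfolding jjl by (rule div2(1)[OF s2])
    have jmod: "jj b l mod 2 = \<sigma> l" for l unfolding jjl by (rule div2(2)[OF s2])
    have jm2: "(jj b l div 2) mod 2 ^ M = m' l" for l unfolding jdiv using ml[of l] by simp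
    show "ii (jj b) = b"
      unfolding b ii_def using jm2 jmod by (simp add: b)
    have ji: "jj b \<in> idx ?K" unfolding b jj_def using jj_idx[OF m0 m' \<sigma>] by simp
    have "jj b l div 2 ^ Suc M = m0 l" for l
    proof -
      have "jj b l div 2 ^ Suc M = jj b l div 2 div 2 ^ M" by (simp add: div_mult2_eq)
      also have "jj b l div 2 = m' l + 2 ^ M * m0 l" by (rule jdiv)
      finally show ?thesis using ml[of l] by simp
    qed
    then show "jj b \<in> ?S" using SubK ji by blast
  qed
  have hv: "(f \<circ> jj) (m', \<sigma>) = Wc M q m0 * Wc M p m' * parv \<sigma> * (if I0 \<and> parv \<sigma> = Wc M m0 m' then C else 0)"
    if "m' \<in> idx M" "\<sigma> \<in> idx 1" for m' \<sigma>
    unfolding f_def jj_def comp_def C_def I0_def M_def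
    using hval[of m0 s0 m' \<sigma> p q n] that m0 p q n unfolding M_def by simp
  have "sum (f \<circ> jj) (idx M \<times> idx 1) = (\<Sum>m'\<in>idx M. \<Sum>\<sigma>\<in>idx 1. (f \<circ> jj) (m', \<sigma>))"
    by (rule sum.cartesian_product')
  also have "\<dots> = (\<Sum>m'\<in>idx M. \<Sum>\<sigma>\<in>idx 1. Wc M q m0 * Wc M p m' * parv (\<sigma> :: 'd vec) * (if I0 \<and> parv \<sigma> = Wc M m0 m' then C else 0))"
  proof (rule sum.cong[OF refl])
    fix m' :: "'d vec" assume m': "m' \<in> idx M"
    show "(\<Sum>\<sigma>\<in>idx 1. (f \<circ> jj) (m', \<sigma>)) = (\<Sum>\<sigma>\<in>idx 1. Wc M q m0 * Wc M p m' * parv (\<sigma> :: 'd vec) * (if I0 \<and> parv \<sigma> = Wc M m0 m' then C else 0))"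
    proof (rule sum.cong[OF refl])
      fix \<sigma> :: "'d vec" assume "\<sigma> \<in> idx 1"
      then show "(f \<circ> jj) (m', \<sigma>) = Wc M q m0 * Wc M p m' * parv \<sigma> * (if I0 \<and> parv \<sigma> = Wc M m0 m' then C else 0)"
        by (rule hv[OF m'])
    qed
  qed
  finally have main: "sum f ?S = (\<Sum>m'\<in>idx M. \<Sum>\<sigma>\<in>idx 1. Wc M q m0 * Wc M p m' * parv (\<sigma> :: 'd vec) * (if I0 \<and> parv \<sigma> = Wc M m0 m' then C else 0))"
    using reidx by simp
  show ?thesis
  proof (cases I0)
    case False
    then show ?thesis using main I0iff by (simp add: f_def)
  next
    case True
    have inner: "(\<Sum>\<sigma>\<in>idx 1. Wc M q m0 * Wc M p m' * parv (\<sigma> :: 'd vec) * (if I0 \<and> parv \<sigma> = Wc M m0 m' then C else 0))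
        = Wc M q m0 * C * 2 ^ (?d - 1) * (Wc M p m' * Wc M m0 m')" for m'
    proof -
      let ?w = "Wc M m0 m'"
      have "(\<Sum>\<sigma>\<in>idx 1. Wc M q m0 * Wc M p m' * parv (\<sigma> :: 'd vec) * (if I0 \<and> parv \<sigma> = ?w then C else 0))
          = Wc M q m0 * Wc M p m' * C * (\<Sum>\<sigma>\<in>idx 1. if parv (\<sigma> :: 'd vec) = ?w then parv \<sigma> else 0)"
        unfolding sum_distrib_left using True by (intro sum.cong refl) auto
      also have "(\<Sum>\<sigma>\<in>idx 1. if parv (\<sigma> :: 'd vec) = ?w then parv \<sigma> else 0) = (\<Sum>\<sigma>\<in>{\<sigma> \<in> idx 1 :: 'd vec set. parv \<sigma> = ?w}. parv \<sigma>)"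
        by (rule sum.inter_filter[symmetric]) (rule finite_idx)
      also have "\<dots> = (\<Sum>\<sigma>\<in>{\<sigma> \<in> idx 1 :: 'd vec set. parv \<sigma> = ?w}. ?w)" by (rule sum.cong) auto
      also have "\<dots> = ?w * 2 ^ (?d - 1)"
        using card_par[of ?w, where 'd='d] walshv_pm[of m0 "cube_pt M m'"] by (simp add: Wc_def)
      finally show ?thesis by (simp add: algebra_simps)
    qed
    have "sum f ?S = (\<Sum>m'\<in>idx M. Wc M q m0 * C * 2 ^ (?d - 1) * (Wc M p m' * Wc M m0 m'))"
      using main inner by simp
    also have "\<dots> = Wc M q m0 * C * 2 ^ (?d - 1) * (\<Sum>m'\<in>idx M. Wc M p m' * Wc M m0 m')"
      by (simp add: sum_distrib_left)
    also have "\<dots> = Wc M q m0 * C * 2 ^ (?d - 1) * (if p = m0 then 2 ^ (M * ?d) else 0)"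
      using Orth[OF p m0] by simp
    finally show ?thesis using True I0iff by (auto simp: f_def C_def)
  qed
qed



lemma PW:
  assumes d: "d \<ge> 1"
  shows "2 ^ Suc s0 / 2 ^ (d * Suc (2 * M)) * 2 ^ (d - 1) * 2 ^ (M * d)
     = (2::real) powi (int (Suc s0) - 1 - int d * int M)"
proof -
  have e: "int (Suc s0) - 1 - int d * int M = int (Suc s0 + (d - 1) + M * d) - int (d * Suc (2 * M))"
    using d by (simp add: algebra_simps of_nat_diff)
  have "(2::real) powi (int (Suc s0) - 1 - int d * int M) = 2 powi int (Suc s0 + (d - 1) + M * d) / 2 powi int (d * Suc (2 * M))"
    unfolding e by (rule power_int_diff) simp
  also have "\<dots> = 2 ^ (Suc s0 + (d - 1) + M * d) / 2 ^ (d * Suc (2 * M))"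
    by (simp only: power_int_of_nat)
  also have "\<dots> = 2 ^ Suc s0 / 2 ^ (d * Suc (2 * M)) * 2 ^ (d - 1) * 2 ^ (M * d)"
    by (simp only: power_add) (simp add: field_simps)
  finally show ?thesis by simp
qed

theorem lemma2:
  fixes s :: nat and p q n :: "'d::finite \<Rightarrow> nat"
  assumes "card (UNIV :: 'd set) \<ge> 2"
    and "s \<ge> 1"
    and "p \<in> idx (ms s)" and "q \<in> idx (ms s)"
    and "n = (\<lambda>l. 2 ^ (2 * ms s) + 2 ^ ms s * p l + q l)"
  shows "(\<forall>m\<in>idx (ms s).
            tauhat (tauE (Fset :: 'd pt set)) n (ms s) m
            = 2 powi (int s - 1 - int (card (UNIV :: 'd set)) * int (ms s)) * Wc (ms s) q m
              * (if m = p then 1 else 0)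
              * (if cube (ms s) m \<subseteq> (Ftil (s - 1) :: 'd pt set) then 1 else 0))
       \<and> tauhat_all (tauE (Fset :: 'd pt set)) n
            = 2 powi (int s - 1 - int (card (UNIV :: 'd set)) * int (ms s)) * Wc (ms s) q p
              * (if cube (ms s) p \<subseteq> (Ftil (s - 1) :: 'd pt set) then 1 else 0)"
proof -
  obtain s0 where s: "s = Suc s0" using assms(2) by (cases s) auto
  define M where "M = ms' s0"
  have msM: "ms s = M" by (simp add: ms_def s M_def)
  let ?d = "card (UNIV :: 'd set)"
  let ?K = "Suc (2 * M)"
  have p: "p \<in> idx M" and q: "q \<in> idx M" using assms(3,4) msM by auto
  have n: "n = (\<lambda>l. 2 ^ (2 * M) + 2 ^ M * p l + q l)" using assms(5) msM by simp
  have d1: "?d \<ge> 1" using assms(1) by simp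
  have nl: "2 ^ (2 * M) \<le> n l \<and> n l < 2 ^ ?K" for l
  proof -
    have "p l < 2 ^ M" using p by (simp add: idx_def)
    then have a: "p l + 1 \<le> 2 ^ M" by simp
    have b: "q l < 2 ^ M" using q by (simp add: idx_def)
    have "2 ^ M * (p l + 1) \<le> (2::nat) ^ M * 2 ^ M" using a by (rule mult_le_mono2)
    then have "2 ^ M * p l + q l < 2 ^ M * 2 ^ M" using b by (simp add: algebra_simps)
    then have "2 ^ M * p l + q l < 2 ^ (2 * M)" by (simp add: power_add[symmetric] mult_2)
    then show ?thesis using n by simp
  qed
  have Lr: "(LEAST k. r \<le> k \<and> n \<in> idx k) = ?K" if r: "r \<le> ?K" for r
  proof (rule Least_equality)
    show "r \<le> ?K \<and> n \<in> idx ?K" using r nl by (simp add: idx_def)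
  next
    fix y assume y: "r \<le> y \<and> n \<in> idx y"
    obtain l :: 'd where True by simp
    have "n l < 2 ^ y" using y by (simp add: idx_def)
    then have "(2::nat) ^ (2 * M) < 2 ^ y" using nl[of l] by linarith
    then have "2 * M < y" by simp
    then show "?K \<le> y" by simp
  qed
  have pw: "2 ^ Suc s0 / 2 ^ (?d * ?K) * 2 ^ (?d - 1) * 2 ^ (M * ?d)
     = (2::real) powi (int s - 1 - int ?d * int (ms s))"
    unfolding msM unfolding s by (rule PW[OF d1])
  have part1: "tauhat (tauE (Fset :: 'd pt set)) n M m
      = 2 powi (int s - 1 - int ?d * int (ms s)) * Wc M q m * (if m = p then 1 else 0)
        * (if cube M m \<subseteq> (Ftil s0 :: 'd pt set) then 1 else 0)" if m: "m \<in> idx M" for m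
  proof -
    have "tauhat (tauE (Fset :: 'd pt set)) n M m
       = (\<Sum>m'\<in>{m' \<in> idx ?K. cube ?K m' \<subseteq> cube M m}. Wc ?K n m' * tauE (Fset :: 'd pt set) ?K m')"
      unfolding tauhat_def Let_def Lr[of M, simplified] ..
    also have "\<dots> = 2 ^ Suc s0 / 2 ^ (?d * ?K) * 2 ^ (?d - 1) * 2 ^ (M * ?d) * Wc M q m * (if m = p then 1 else 0)
         * (if cube M m \<subseteq> (Ftil s0 :: 'd pt set) then 1 else 0)"
      unfolding M_def by (rule Smain) (use p q m n in \<open>simp_all add: M_def\<close>)
    finally show ?thesis unfolding pw .
  qed
  have A: "\<forall>m\<in>idx (ms s).
            tauhat (tauE (Fset :: 'd pt set)) n (ms s) m
            = 2 powi (int s - 1 - int ?d * int (ms s)) * Wc (ms s) q m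
              * (if m = p then 1 else 0)
              * (if cube (ms s) m \<subseteq> (Ftil (s - 1) :: 'd pt set) then 1 else 0)"
    using part1 unfolding msM by (simp add: s)
  have B: "tauhat_all (tauE (Fset :: 'd pt set)) n
            = 2 powi (int s - 1 - int ?d * int (ms s)) * Wc (ms s) q p
              * (if cube (ms s) p \<subseteq> (Ftil (s - 1) :: 'd pt set) then 1 else 0)"
  proof -
    let ?f = "\<lambda>m. Wc ?K n m * tauE (Fset :: 'd pt set) ?K m"
    let ?g = "\<lambda>m :: 'd vec. (\<lambda>l. m l div 2 ^ Suc M)"
    have c0: "cube 0 (\<lambda>l. 0) = (UNIV :: 'd pt set)" by (auto simp: mem_cube)
    have L0: "(LEAST k. 0 \<le> k \<and> n \<in> idx k) = ?K" by (rule Lr) simp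
    have "tauhat_all (tauE (Fset :: 'd pt set)) n = sum ?f (idx ?K)"
      unfolding tauhat_all_def tauhat_def Let_def L0 c0 by (simp del: tauE.simps)
    also have "\<dots> = (\<Sum>m0\<in>idx M. sum ?f {x \<in> idx ?K. ?g x = m0})"
    proof (rule sum.group[symmetric])
      show "finite (idx ?K :: 'd vec set)" by (rule finite_idx)
      show "finite (idx M :: 'd vec set)" by (rule finite_idx)
      show "?g ` idx ?K \<subseteq> idx M"
      proof (rule image_subsetI)
        fix m :: "'d vec" assume mK: "m \<in> idx ?K"
        show "?g m \<in> idx M" unfolding idx_def
        proof (intro CollectI allI)
        fix l
        have "m l < 2 ^ Suc (2 * M)" using mK by (simp add: idx_def)
        moreover have "(2::nat) ^ Suc (2 * M) = 2 ^ M * 2 ^ Suc M" by (simp add: power_add[symmetric])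
        ultimately have "m l < 2 ^ M * 2 ^ Suc M" by simp
        then show "m l div 2 ^ Suc M < 2 ^ M" by (rule less_mult_imp_div_less)
        qed
      qed
    qed
    also have "\<dots> = (\<Sum>m0\<in>idx M. tauhat (tauE (Fset :: 'd pt set)) n M m0)"
    proof (rule sum.cong[OF refl])
      fix m0 :: "'d vec" assume m0: "m0 \<in> idx M"
      have "{x \<in> idx ?K. ?g x = m0} = {m' \<in> idx ?K. cube ?K m' \<subseteq> cube M m0}"
      proof (rule Collect_cong)
        fix x :: "'d vec"
        have "?K - M = Suc M" by simp
        then show "(x \<in> idx ?K \<and> ?g x = m0) = (x \<in> idx ?K \<and> cube ?K x \<subseteq> cube M m0)"
          using SubCube[of M ?K x m0] m0 by (auto simp: fun_eq_iff)
      qed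
      then show "sum ?f {x \<in> idx ?K. ?g x = m0} = tauhat (tauE (Fset :: 'd pt set)) n M m0"
        unfolding tauhat_def Let_def Lr[of M, simplified] by simp
    qed
    also have "\<dots> = (\<Sum>m0\<in>idx M. if m0 = p then 2 powi (int s - 1 - int ?d * int (ms s)) * Wc M q p
        * (if cube M p \<subseteq> (Ftil s0 :: 'd pt set) then 1 else 0) else 0)"
      by (rule sum.cong[OF refl]) (simp add: part1)
    also have "\<dots> = 2 powi (int s - 1 - int ?d * int (ms s)) * Wc M q p
        * (if cube M p \<subseteq> (Ftil s0 :: 'd pt set) then 1 else 0)"
      using p by (simp add: sum.delta finite_idx)
    finally show ?thesis unfolding msM by (simp add: s)
  qed
  show ?thesis using A B by blast
qed

end
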